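(* Let $K$ be a skew field, $V$ a left (topological) $K$-vector space with basis $v^0,v^1,\ldots$, $V'$ the dual right $K$-vector space with basis $p_0,p_1,\ldots$, with pairing $(\cdot,\cdot)$; let $\mathbf f\in V$, $\mathbf g\in V'$, $y_i^k=(v^k,p_i)$, $f_i=(\mathbf f,p_i)$, $g^k=(v^k,\mathbf g)$, and assume $D=(y_i^k)$ generic. Then: (a) $(\Delta_R^m f)_{i_0\ldots i_m}^{k_0\ldots k_m}$ is symmetric with respect to $i_0,\ldots,i_m$ (invariant under any permutation of these indices) and with respect to $k_0,\ldots,k_{m-1}$. (b) $(\Delta_L^m g)_{i_0\ldots i_m}^{k_0\ldots k_m}$ is symmetric with respect to $k_0,\ldots,k_m$ and with respect to $i_0,\ldots,i_{m-1}$.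
   Context: The pairing $(\cdot,\cdot):V\times V'\to K$ is biadditive with $(\lambda v,p\mu)=\lambda(v,p)\mu$. $D$ is the infinite matrix with entry $y_i^k$ in row $k$, column $i$. Difference derivatives: for pairwise distinct $i_0,\ldots,i_m$ and pairwise distinct $k_0,\ldots,k_m$ (extended to permutations $i_0,i_1,\ldots$ and $k_0,k_1,\ldots$ of $\{0,1,\ldots\}$), for generic $D$ there are unique upper triangular $A=(a_m^j)$ and lower triangular $C=(c_l^m)$ such that $q_m=\sum_{j=0}^m p_{i_j}a_m^j$, $w^m=\sum_{l=0}^m c_l^m v^{k_l}$ satisfy $(w^m,q_{m'})=0$ for $m\ne m'$ and $(w^m,p_{i_m})=(v^{k_m},q_m)=1$ (equivalently, $q_m$ is the unique right combination of $p_{i_0},\ldots,p_{i_m}$ with $(v^{k_l},q_m)=\delta_{lm}$ for $l\le m$, and $w^m$ the unique left combination of $v^{k_0},\ldots,v^{k_m}$ with $(w^m,p_{i_j})=\delta_{jm}$ for $j\le m$). Define $(\Delta_R^m f)_{i_0\ldots i_m}^{k_0\ldots k_m}=\sum_j f_{i_j}a_m^j=(\mathbf f,q_m)$ and $(\Delta_L^m g)_{i_0\ldots i_m}^{k_0\ldots k_m}=\sum_l c_l^m g^{k_l}=(w^m,\mathbf g)$. Genericity means all finite square submatrices of $D$ that need to be inverted are invertible. *)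

theory Defs
  imports "Jordan_Normal_Form.Matrix"
begin

text \<open>Coordinates: y k i = y_i^k = (v^k, p_i); f i = f_i = (f, p_i); g k = g^k = (v^k, g).
  Index tuples i_0..i_m and k_0..k_m are lists of length m+1.\<close>

definition subD :: "(nat \<Rightarrow> nat \<Rightarrow> 'a) \<Rightarrow> nat list \<Rightarrow> nat list \<Rightarrow> 'a mat" where
  "subD y ks is = mat (length ks) (length is) (\<lambda>(l, j). y (ks ! l) (is ! j))"

definition generic :: "(nat \<Rightarrow> nat \<Rightarrow> 'a::division_ring) \<Rightarrow> bool" where
  "generic y \<longleftrightarrow> (\<forall>ks is. length ks = length is \<longrightarrow> distinct ks \<longrightarrow> distinct is \<longrightarrow>
      invertible_mat (subD y ks is))"

text \<open>Coefficients a_m^j of q_m = sum_j p_{i_j} a_m^j with (v^{k_l}, q_m) = delta_{lm}, l <= m.\<close>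
definition coeffR :: "(nat \<Rightarrow> nat \<Rightarrow> 'a::division_ring) \<Rightarrow> nat list \<Rightarrow> nat list \<Rightarrow> 'a list" where
  "coeffR y is ks = (THE a. length a = length is \<and>
     (\<forall>l<length ks. (\<Sum>j<length is. y (ks ! l) (is ! j) * a ! j) =
        (if l = length ks - 1 then 1 else 0)))"

text \<open>Coefficients c_l^m of w^m = sum_l c_l^m v^{k_l} with (w^m, p_{i_j}) = delta_{jm}, j <= m.\<close>
definition coeffL :: "(nat \<Rightarrow> nat \<Rightarrow> 'a::division_ring) \<Rightarrow> nat list \<Rightarrow> nat list \<Rightarrow> 'a list" where
  "coeffL y is ks = (THE c. length c = length ks \<and>
     (\<forall>j<length is. (\<Sum>l<length ks. c ! l * y (ks ! l) (is ! j)) =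
        (if j = length is - 1 then 1 else 0)))"

definition DeltaR :: "(nat \<Rightarrow> nat \<Rightarrow> 'a::division_ring) \<Rightarrow> (nat \<Rightarrow> 'a) \<Rightarrow> nat list \<Rightarrow> nat list \<Rightarrow> 'a" where
  "DeltaR y f is ks = (\<Sum>j<length is. f (is ! j) * coeffR y is ks ! j)"

definition DeltaL :: "(nat \<Rightarrow> nat \<Rightarrow> 'a::division_ring) \<Rightarrow> (nat \<Rightarrow> 'a) \<Rightarrow> nat list \<Rightarrow> nat list \<Rightarrow> 'a" where
  "DeltaL y g is ks = (\<Sum>l<length ks. coeffL y is ks ! l * g (ks ! l))"

end

theory Submission imports Defs "HOL-Combinatorics.Permutations" begin

lemma inv_obtain:
  fixes M :: "'a::division_ring mat"
  assumes "invertible_mat M" "M \<in> carrier_mat n n"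
  shows "\<exists>B. M * B = 1\<^sub>m n \<and> B * M = 1\<^sub>m n \<and> B \<in> carrier_mat n n"
proof -
  obtain B where B: "M * B = 1\<^sub>m (dim_row M)" "B * M = 1\<^sub>m (dim_row B)"
    using assms(1) unfolding invertible_mat_def inverts_mat_def by auto
  have "dim_col B = n" using arg_cong[OF B(1), of dim_col] assms(2) by simp
  moreover have "dim_row B = n" using arg_cong[OF B(2), of dim_col] assms(2) by simp
  ultimately show ?thesis using B assms(2) by (intro exI[of _ B]) auto
qed

lemma inv_right_unique:
  fixes M :: "'a::division_ring mat"
  assumes "invertible_mat M" "M \<in> carrier_mat n n" "A \<in> carrier_mat n k" "A' \<in> carrier_mat n k"
    "M * A = M * A'"
  shows "A = A'"
proof -
  obtain B where B: "M * B = 1\<^sub>m n" "B * M = 1\<^sub>m n" and Bc: "B \<in> carrier_mat n n"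
    using inv_obtain[OF assms(1,2)] by blast
  have "A = (B * M) * A" using B assms by simp
  also have "\<dots> = B * (M * A)" using Bc assms by (metis assoc_mult_mat)
  also have "\<dots> = B * (M * A')" using assms by simp
  also have "\<dots> = (B * M) * A'" using Bc assms by (metis assoc_mult_mat)
  also have "\<dots> = A'" using B assms by simp
  finally show ?thesis .
qed

lemma inv_left_unique:
  fixes M :: "'a::division_ring mat"
  assumes "invertible_mat M" "M \<in> carrier_mat n n" "A \<in> carrier_mat k n" "A' \<in> carrier_mat k n"
    "A * M = A' * M"
  shows "A = A'"
proof -
  obtain B where B: "M * B = 1\<^sub>m n" "B * M = 1\<^sub>m n" and Bc: "B \<in> carrier_mat n n"
    using inv_obtain[OF assms(1,2)] by blast
  have "A = A * (M * B)" using B assms by simp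
  also have "\<dots> = (A * M) * B" using Bc assms by (metis assoc_mult_mat)
  also have "\<dots> = (A' * M) * B" using assms by simp
  also have "\<dots> = A' * (M * B)" using Bc assms by (metis assoc_mult_mat)
  also have "\<dots> = A'" using B assms by simp
  finally show ?thesis .
qed

lemma inv_right_ex:
  fixes M :: "'a::division_ring mat"
  assumes "invertible_mat M" "M \<in> carrier_mat n n" "R \<in> carrier_mat n k"
  shows "\<exists>A \<in> carrier_mat n k. M * A = R"
proof -
  obtain B where B: "M * B = 1\<^sub>m n" "B * M = 1\<^sub>m n" and Bc: "B \<in> carrier_mat n n"
    using inv_obtain[OF assms(1,2)] by blast
  have "M * (B * R) = (M * B) * R" using Bc assms by (metis assoc_mult_mat)
  also have "\<dots> = R" using B assms by simp
  finally show ?thesis using Bc assms by (intro bexI[of _ "B * R"]) auto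
qed

lemma inv_left_ex:
  fixes M :: "'a::division_ring mat"
  assumes "invertible_mat M" "M \<in> carrier_mat n n" "R \<in> carrier_mat k n"
  shows "\<exists>A \<in> carrier_mat k n. A * M = R"
proof -
  obtain B where B: "M * B = 1\<^sub>m n" "B * M = 1\<^sub>m n" and Bc: "B \<in> carrier_mat n n"
    using inv_obtain[OF assms(1,2)] by blast
  have "(R * B) * M = R * (B * M)" using Bc assms by (metis assoc_mult_mat)
  also have "\<dots> = R" using B assms by simp
  finally show ?thesis using Bc assms by (intro bexI[of _ "R * B"]) auto
qed

lemma subD_multR:
  assumes "l < n" "length ks = n" "length is = n"
  shows "(subD y ks is * mat n 1 (\<lambda>(j,_). a!j)) $$ (l,0) = (\<Sum>j<n. y (ks!l) (is!j) * a!j)"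
  using assms by (simp add: subD_def scalar_prod_def lessThan_atLeast0 row_def col_def)

lemma subD_multL:
  assumes "j < n" "length ks = n" "length is = n"
  shows "(mat 1 n (\<lambda>(_,l). c!l) * subD y ks is) $$ (0,j) = (\<Sum>l<n. c!l * y (ks!l) (is!j))"
  using assms by (simp add: subD_def scalar_prod_def lessThan_atLeast0 row_def col_def)

lemma solR:
  fixes y :: "nat \<Rightarrow> nat \<Rightarrow> 'a::division_ring"
  assumes inv: "invertible_mat (subD y ks is)" and len: "length ks = n" "length is = n"
  shows "\<exists>!a. length a = n \<and> (\<forall>l<n. (\<Sum>j<n. y (ks!l) (is!j) * a!j) = r l)"
proof -
  have Mc: "subD y ks is \<in> carrier_mat n n" using len by (simp add: subD_def)
  obtain A where Ac: "A \<in> carrier_mat n 1" and MA: "subD y ks is * A = mat n 1 (\<lambda>(l,_). r l)"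
    using inv_right_ex[OF inv Mc, of "mat n 1 (\<lambda>(l,_). r l)" 1] by auto
  define a where "a = map (\<lambda>j. A $$ (j,0)) [0..<n]"
  have Aeq: "mat n 1 (\<lambda>(j,_). a!j) = A"
    using Ac by (intro eq_matI) (auto simp: a_def)
  have ex: "length a = n \<and> (\<forall>l<n. (\<Sum>j<n. y (ks!l) (is!j) * a!j) = r l)"
  proof (intro conjI allI impI)
    show "length a = n" by (simp add: a_def)
    fix l assume l: "l < n"
    have "(\<Sum>j<n. y (ks!l) (is!j) * a!j) = (subD y ks is * mat n 1 (\<lambda>(j,_). a!j)) $$ (l,0)"
      by (rule subD_multR[OF l len, symmetric])
    also have "\<dots> = r l" using MA Aeq l by simp
    finally show "(\<Sum>j<n. y (ks!l) (is!j) * a!j) = r l" .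
  qed
  show ?thesis
  proof (rule ex1I[of _ a])
    show "length a = n \<and> (\<forall>l<n. (\<Sum>j<n. y (ks!l) (is!j) * a!j) = r l)" by (rule ex)
    fix b assume b: "length b = n \<and> (\<forall>l<n. (\<Sum>j<n. y (ks!l) (is!j) * b!j) = r l)"
    have "subD y ks is * mat n 1 (\<lambda>(j,_). b!j) = subD y ks is * mat n 1 (\<lambda>(j,_). a!j)"
    proof (rule eq_matI)
      fix i j assume "i < dim_row (subD y ks is * mat n 1 (\<lambda>(j,_). a!j))"
        "j < dim_col (subD y ks is * mat n 1 (\<lambda>(j,_). a!j))"
      then have i: "i < n" and j: "j = 0" using Mc by auto
      show "(subD y ks is * mat n 1 (\<lambda>(j,_). b!j)) $$ (i,j) = (subD y ks is * mat n 1 (\<lambda>(j,_). a!j)) $$ (i,j)"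
        using subD_multR[OF i len, where a=b] subD_multR[OF i len, where a=a] b ex i j by simp
    qed (use Mc in auto)
    then have "mat n 1 (\<lambda>(j,_). b!j) = mat n 1 (\<lambda>(j,_). a!j)"
      by (rule inv_right_unique[OF inv Mc, rotated 2]) auto
    then have "\<forall>j<n. b!j = a!j"
      by (metis (no_types, lifting) index_mat(1) case_prod_conv zero_less_one
        Suc_mono One_nat_def less_Suc0)
    then show "b = a" using b ex by (intro nth_equalityI) auto
  qed
qed

lemma solL:
  fixes y :: "nat \<Rightarrow> nat \<Rightarrow> 'a::division_ring"
  assumes inv: "invertible_mat (subD y ks is)" and len: "length ks = n" "length is = n"
  shows "\<exists>!c. length c = n \<and> (\<forall>j<n. (\<Sum>l<n. c!l * y (ks!l) (is!j)) = r j)"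
proof -
  have Mc: "subD y ks is \<in> carrier_mat n n" using len by (simp add: subD_def)
  obtain A where Ac: "A \<in> carrier_mat 1 n" and MA: "A * subD y ks is = mat 1 n (\<lambda>(_,j). r j)"
    using inv_left_ex[OF inv Mc, of "mat 1 n (\<lambda>(_,j). r j)" 1] by auto
  define a where "a = map (\<lambda>j. A $$ (0,j)) [0..<n]"
  have Aeq: "mat 1 n (\<lambda>(_,j). a!j) = A"
    using Ac by (intro eq_matI) (auto simp: a_def)
  have ex: "length a = n \<and> (\<forall>j<n. (\<Sum>l<n. a!l * y (ks!l) (is!j)) = r j)"
  proof (intro conjI allI impI)
    show "length a = n" by (simp add: a_def)
    fix l assume l: "l < n"
    have "(\<Sum>j<n. a!j * y (ks!j) (is!l)) = (mat 1 n (\<lambda>(_,j). a!j) * subD y ks is) $$ (0,l)"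
      by (rule subD_multL[OF l len, symmetric])
    also have "\<dots> = r l" using MA Aeq l by simp
    finally show "(\<Sum>j<n. a!j * y (ks!j) (is!l)) = r l" .
  qed
  show ?thesis
  proof (rule ex1I[of _ a])
    show "length a = n \<and> (\<forall>j<n. (\<Sum>l<n. a!l * y (ks!l) (is!j)) = r j)" by (rule ex)
    fix b assume b: "length b = n \<and> (\<forall>j<n. (\<Sum>l<n. b!l * y (ks!l) (is!j)) = r j)"
    have "mat 1 n (\<lambda>(_,j). b!j) * subD y ks is = mat 1 n (\<lambda>(_,j). a!j) * subD y ks is"
    proof (rule eq_matI)
      fix i j assume "i < dim_row (mat 1 n (\<lambda>(_,j). a!j) * subD y ks is)"
        "j < dim_col (mat 1 n (\<lambda>(_,j). a!j) * subD y ks is)"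
      then have j: "j < n" and i: "i = 0" using Mc by auto
      show "(mat 1 n (\<lambda>(_,j). b!j) * subD y ks is) $$ (i,j) = (mat 1 n (\<lambda>(_,j). a!j) * subD y ks is) $$ (i,j)"
        using subD_multL[OF j len, where c=b] subD_multL[OF j len, where c=a] b ex i j by simp
    qed (use Mc in auto)
    then have "mat 1 n (\<lambda>(_,j). b!j) = mat 1 n (\<lambda>(_,j). a!j)"
      by (rule inv_left_unique[OF inv Mc, rotated 2]) auto
    then have "\<forall>j<n. b!j = a!j"
    proof (intro allI impI)
      fix j assume e: "mat 1 n (\<lambda>(_,j). b!j) = mat 1 n (\<lambda>(_,j). a!j)" and j: "j < n"
      have "mat 1 n (\<lambda>(_,j). b!j) $$ (0,j) = mat 1 n (\<lambda>(_,j). a!j) $$ (0,j)" using e by simp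
      then show "b!j = a!j" using j by simp
    qed
    then show "b = a" using b ex by (intro nth_equalityI) auto
  qed
qed

definition PR where
  "PR y is ks a \<longleftrightarrow> length a = length is \<and>
     (\<forall>l<length ks. (\<Sum>j<length is. y (ks ! l) (is ! j) * a ! j) =
        (if l = length ks - 1 then 1 else 0))"

definition PL where
  "PL y is ks c \<longleftrightarrow> length c = length ks \<and>
     (\<forall>j<length is. (\<Sum>l<length ks. c ! l * y (ks ! l) (is ! j)) =
        (if j = length is - 1 then 1 else 0))"

lemma coeffR_char:
  fixes y :: "nat \<Rightarrow> nat \<Rightarrow> 'a::division_ring"
  assumes "generic y" "distinct ks" "distinct is" "length ks = length is"
  shows "PR y is ks (coeffR y is ks)" "PR y is ks a \<Longrightarrow> coeffR y is ks = a"
proof -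
  have inv: "invertible_mat (subD y ks is)" using assms unfolding generic_def by blast
  have ex: "\<exists>!a. PR y is ks a"
    using solR[OF inv assms(4) refl, of "\<lambda>l. if l = length ks - 1 then 1 else 0"] assms(4)
    unfolding PR_def by simp
  have c: "coeffR y is ks = (THE a. PR y is ks a)" unfolding coeffR_def PR_def ..
  show "PR y is ks (coeffR y is ks)" unfolding c by (rule theI'[OF ex])
  show "PR y is ks a \<Longrightarrow> coeffR y is ks = a" unfolding c using ex by (rule the1_equality)
qed

lemma coeffL_char:
  fixes y :: "nat \<Rightarrow> nat \<Rightarrow> 'a::division_ring"
  assumes "generic y" "distinct ks" "distinct is" "length ks = length is"
  shows "PL y is ks (coeffL y is ks)" "PL y is ks a \<Longrightarrow> coeffL y is ks = a"
proof -
  have inv: "invertible_mat (subD y ks is)" using assms unfolding generic_def by blast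
  have ex: "\<exists>!a. PL y is ks a"
    using solL[OF inv assms(4) refl, of "\<lambda>l. if l = length is - 1 then 1 else 0"] assms(4)
    unfolding PL_def by simp
  have c: "coeffL y is ks = (THE a. PL y is ks a)" unfolding coeffL_def PL_def ..
  show "PL y is ks (coeffL y is ks)" unfolding c by (rule theI'[OF ex])
  show "PL y is ks a \<Longrightarrow> coeffL y is ks = a" unfolding c using ex by (rule the1_equality)
qed

lemma mset_last:
  assumes "length xs = Suc m"
  shows "mset xs = mset (take m xs) + {#xs ! m#}"
proof -
  have "xs = take m xs @ [xs ! m]" using assms
    by (metis lessI take_Suc_conv_app_nth take_all order_refl)
  then show ?thesis by (metis mset_append mset_single_iff_right add_mset_add_single mset.simps)
qed

lemma take_perm_nth:
  assumes "mset (take m xs) = mset (take m ys)" "l < m" "length xs = Suc m" "length ys = Suc m"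
  shows "\<exists>l0<m. ys ! l0 = xs ! l"
proof -
  have "xs ! l \<in> set (take m xs)" using assms by (auto simp: in_set_conv_nth)
  then have "xs ! l \<in> set (take m ys)" by (metis assms(1) set_mset_mset)
  then obtain l0 where "l0 < length (take m ys)" "take m ys ! l0 = xs ! l" by (auto simp: in_set_conv_nth)
  then show ?thesis using assms by auto
qed

lemma part1:
  fixes y :: "nat \<Rightarrow> nat \<Rightarrow> 'a::division_ring" and f g :: "nat \<Rightarrow> 'a"
    and m :: nat and "is" ks :: "nat list"
  assumes gen: "generic y"
    and len_is: "length is = Suc m" and len_ks: "length ks = Suc m"
    and dist_is: "distinct is" and dist_ks: "distinct ks"
  shows "\<forall>is'. mset is' = mset is \<longrightarrow> DeltaR y f is' ks = DeltaR y f is ks"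
proof -
  have lens: "length ks = length is" using len_is len_ks by simp
  {
    fix is' :: "nat list" assume ms: "mset is' = mset is"
    obtain p where p: "p permutes {..<length is}" and pl: "permute_list p is = is'"
      using mset_eq_permutation[OF ms] by blast
    have li: "length is' = Suc m" using ms len_is by (metis size_mset)
    have di: "distinct is'" using ms dist_is mset_eq_imp_distinct_iff by blast
    have isn: "\<And>j. j < Suc m \<Longrightarrow> is' ! j = is ! p j"
      using permute_list_nth[OF p] pl len_is by auto
    define a where "a = coeffR y is ks"
    have Pa: "PR y is ks a" unfolding a_def by (rule coeffR_char(1)[OF gen dist_ks dist_is lens])
    have la: "length a = Suc m" using Pa len_is by (simp add: PR_def)
    have p': "p permutes {..<length a}" using p la len_is by simp
    have an: "\<And>j. j < Suc m \<Longrightarrow> permute_list p a ! j = a ! p j"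
      using permute_list_nth[OF p'] la by auto
    have sp: "(\<Sum>j<Suc m. h (p j)) = (\<Sum>j<Suc m. h j)" for h
      using sum.permute[OF p, of h] unfolding len_is comp_def by (rule sym)
    have PP: "PR y is' ks (permute_list p a)"
      unfolding PR_def
    proof (intro conjI allI impI)
      show "length (permute_list p a) = length is'" using la li by simp
      fix l assume "l < length ks"
      have "(\<Sum>j<length is'. y (ks ! l) (is' ! j) * permute_list p a ! j)
          = (\<Sum>j<Suc m. (\<lambda>j. y (ks ! l) (is ! j) * a ! j) (p j))"
        using li isn an by (intro sum.cong) auto
      also have "\<dots> = (\<Sum>j<length is. y (ks ! l) (is ! j) * a ! j)" using sp len_is by simp
      also have "\<dots> = (if l = length ks - 1 then 1 else 0)" using Pa \<open>l < length ks\<close> by (simp add: PR_def)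
      finally show "(\<Sum>j<length is'. y (ks ! l) (is' ! j) * permute_list p a ! j) = (if l = length ks - 1 then 1 else 0)" .
    qed
    have ca: "coeffR y is' ks = permute_list p a"
      using coeffR_char(2)[OF gen dist_ks di _ PP] li len_ks by simp
    have "DeltaR y f is' ks = (\<Sum>j<Suc m. (\<lambda>j. f (is ! j) * a ! j) (p j))"
      unfolding DeltaR_def ca using li isn an by (intro sum.cong) auto
    also have "\<dots> = DeltaR y f is ks" using sp len_is by (simp add: DeltaR_def a_def)
    finally have "DeltaR y f is' ks = DeltaR y f is ks" .
  }
  then show ?thesis by blast
qed

lemma part2:
  fixes y :: "nat \<Rightarrow> nat \<Rightarrow> 'a::division_ring" and f g :: "nat \<Rightarrow> 'a"
    and m :: nat and "is" ks :: "nat list"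
  assumes gen: "generic y"
    and len_is: "length is = Suc m" and len_ks: "length ks = Suc m"
    and dist_is: "distinct is" and dist_ks: "distinct ks"
  shows "\<forall>ks'. mset ks' = mset ks \<longrightarrow> DeltaL y g is ks' = DeltaL y g is ks"
proof -
  have lens: "length ks = length is" using len_is len_ks by simp
  {
    fix ks' :: "nat list" assume ms: "mset ks' = mset ks"
    obtain p where p: "p permutes {..<length ks}" and pl: "permute_list p ks = ks'"
      using mset_eq_permutation[OF ms] by blast
    have li: "length ks' = Suc m" using ms len_ks by (metis size_mset)
    have di: "distinct ks'" using ms dist_ks mset_eq_imp_distinct_iff by blast
    have isn: "\<And>j. j < Suc m \<Longrightarrow> ks' ! j = ks ! p j"
      using permute_list_nth[OF p] pl len_ks by auto
    define a where "a = coeffL y is ks"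
    have Pa: "PL y is ks a" unfolding a_def by (rule coeffL_char(1)[OF gen dist_ks dist_is lens])
    have la: "length a = Suc m" using Pa len_ks by (simp add: PL_def)
    have p': "p permutes {..<length a}" using p la len_ks by simp
    have an: "\<And>j. j < Suc m \<Longrightarrow> permute_list p a ! j = a ! p j"
      using permute_list_nth[OF p'] la by auto
    have sp: "(\<Sum>j<Suc m. h (p j)) = (\<Sum>j<Suc m. h j)" for h
      using sum.permute[OF p, of h] unfolding len_ks comp_def by (rule sym)
    have PP: "PL y is ks' (permute_list p a)"
      unfolding PL_def
    proof (intro conjI allI impI)
      show "length (permute_list p a) = length ks'" using la li by simp
      fix l assume "l < length is"
      have "(\<Sum>j<length ks'. permute_list p a ! j * y (ks' ! j) (is ! l))
          = (\<Sum>j<Suc m. (\<lambda>j. a ! j * y (ks ! j) (is ! l)) (p j))"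
        using li isn an by (intro sum.cong) auto
      also have "\<dots> = (\<Sum>j<length ks. a ! j * y (ks ! j) (is ! l))" using sp len_ks by simp
      also have "\<dots> = (if l = length is - 1 then 1 else 0)" using Pa \<open>l < length is\<close> by (simp add: PL_def)
      finally show "(\<Sum>j<length ks'. permute_list p a ! j * y (ks' ! j) (is ! l)) = (if l = length is - 1 then 1 else 0)" .
    qed
    have ca: "coeffL y is ks' = permute_list p a"
      using coeffL_char(2)[OF gen di dist_is _ PP] li len_is by simp
    have "DeltaL y g is ks' = (\<Sum>j<Suc m. (\<lambda>j. a ! j * g (ks ! j)) (p j))"
      unfolding DeltaL_def ca using li isn an by (intro sum.cong) auto
    also have "\<dots> = DeltaL y g is ks" using sp len_ks by (simp add: DeltaL_def a_def)
    finally have "DeltaL y g is ks' = DeltaL y g is ks" .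
  }
  then show ?thesis by blast
qed

lemma part3:
  fixes y :: "nat \<Rightarrow> nat \<Rightarrow> 'a::division_ring" and f g :: "nat \<Rightarrow> 'a"
    and m :: nat and "is" ks :: "nat list"
  assumes gen: "generic y"
    and len_is: "length is = Suc m" and len_ks: "length ks = Suc m"
    and dist_is: "distinct is" and dist_ks: "distinct ks"
  shows "\<forall>ks'. length ks' = Suc m \<longrightarrow> mset (take m ks') = mset (take m ks) \<longrightarrow> ks' ! m = ks ! m \<longrightarrow> DeltaR y f is ks' = DeltaR y f is ks"
proof -
  have lens: "length ks = length is" using len_is len_ks by simp
  {
    fix ks' :: "nat list" assume li: "length ks' = Suc m" and mt: "mset (take m ks') = mset (take m ks)"
      and lst: "ks' ! m = ks ! m"
    have "mset ks' = mset ks" using mset_last[OF li] mset_last[OF len_ks] mt lst by simp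
    then have di: "distinct ks'" using dist_ks mset_eq_imp_distinct_iff by blast
    define a where "a = coeffR y is ks"
    have Pa: "PR y is ks a" unfolding a_def by (rule coeffR_char(1)[OF gen dist_ks dist_is lens])
    have PP: "PR y is ks' a" unfolding PR_def
    proof (intro conjI allI impI)
      show "length a = length is" using Pa by (simp add: PR_def)
      fix l assume l: "l < length ks'"
      show "(\<Sum>j<length is. y (ks' ! l) (is ! j) * a ! j) = (if l = length ks' - 1 then 1 else 0)"
      proof (cases "l = m")
        case True
        then show ?thesis using Pa lst li len_ks by (simp add: PR_def)
      next
        case False
        then have "l < m" using l li by simp
        then obtain l0 where l0: "l0 < m" "ks ! l0 = ks' ! l"
          using take_perm_nth[OF mt _ li len_ks] by blast
        then have "(\<Sum>j<length is. y (ks ! l0) (is ! j) * a ! j) = 0"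
        proof -
          have "\<forall>l<length ks. (\<Sum>j<length is. y (ks ! l) (is ! j) * a ! j) = (if l = length ks - 1 then 1 else 0)"
            using Pa by (simp add: PR_def)
          from spec[OF this, of l0] show ?thesis using l0(1) len_ks by simp
        qed
        then show ?thesis using l0 False li by simp
      qed
    qed
    have "coeffR y is ks' = a"
      using coeffR_char(2)[OF gen di dist_is _ PP] li len_is by simp
    then have "DeltaR y f is ks' = DeltaR y f is ks" by (simp add: DeltaR_def a_def)
  }
  then show ?thesis by blast
qed

lemma part4:
  fixes y :: "nat \<Rightarrow> nat \<Rightarrow> 'a::division_ring" and f g :: "nat \<Rightarrow> 'a"
    and m :: nat and "is" ks :: "nat list"
  assumes gen: "generic y"
    and len_is: "length is = Suc m" and len_ks: "length ks = Suc m"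
    and dist_is: "distinct is" and dist_ks: "distinct ks"
  shows "\<forall>is'. length is' = Suc m \<longrightarrow> mset (take m is') = mset (take m is) \<longrightarrow> is' ! m = is ! m \<longrightarrow> DeltaL y g is' ks = DeltaL y g is ks"
proof -
  have lens: "length ks = length is" using len_is len_ks by simp
  {
    fix is' :: "nat list" assume li: "length is' = Suc m" and mt: "mset (take m is') = mset (take m is)"
      and lst: "is' ! m = is ! m"
    have "mset is' = mset is" using mset_last[OF li] mset_last[OF len_is] mt lst by simp
    then have di: "distinct is'" using dist_is mset_eq_imp_distinct_iff by blast
    define a where "a = coeffL y is ks"
    have Pa: "PL y is ks a" unfolding a_def by (rule coeffL_char(1)[OF gen dist_ks dist_is lens])
    have PP: "PL y is' ks a" unfolding PL_def
    proof (intro conjI allI impI)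
      show "length a = length ks" using Pa by (simp add: PL_def)
      fix l assume l: "l < length is'"
      show "(\<Sum>j<length ks. a ! j * y (ks ! j) (is' ! l)) = (if l = length is' - 1 then 1 else 0)"
      proof (cases "l = m")
        case True
        then show ?thesis using Pa lst li len_is by (simp add: PL_def)
      next
        case False
        then have "l < m" using l li by simp
        then obtain l0 where l0: "l0 < m" "is ! l0 = is' ! l"
          using take_perm_nth[OF mt _ li len_is] by blast
        then have "(\<Sum>j<length ks. a ! j * y (ks ! j) (is ! l0)) = 0"
        proof -
          have "\<forall>l<length is. (\<Sum>j<length ks. a ! j * y (ks ! j) (is ! l)) = (if l = length is - 1 then 1 else 0)"
            using Pa by (simp add: PL_def)
          from spec[OF this, of l0] show ?thesis using l0(1) len_is by simp
        qed
        then show ?thesis using l0 False li by simp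
      qed
    qed
    have "coeffL y is' ks = a"
      using coeffL_char(2)[OF gen dist_ks di _ PP] li len_ks by simp
    then have "DeltaL y g is' ks = DeltaL y g is ks" by (simp add: DeltaL_def a_def)
  }
  then show ?thesis by blast
qed

theorem mainTheorem4:
  fixes y :: "nat \<Rightarrow> nat \<Rightarrow> 'a::division_ring" and f g :: "nat \<Rightarrow> 'a"
    and m :: nat and "is" ks :: "nat list"
  assumes gen: "generic y"
    and len_is: "length is = Suc m" and len_ks: "length ks = Suc m"
    and dist_is: "distinct is" and dist_ks: "distinct ks"
  shows "(\<forall>is'. mset is' = mset is \<longrightarrow> DeltaR y f is' ks = DeltaR y f is ks)
       \<and> (\<forall>ks'. length ks' = Suc m \<longrightarrow> mset (take m ks') = mset (take m ks) \<longrightarrow> ks' ! m = ks ! m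
              \<longrightarrow> DeltaR y f is ks' = DeltaR y f is ks)
       \<and> (\<forall>ks'. mset ks' = mset ks \<longrightarrow> DeltaL y g is ks' = DeltaL y g is ks)
       \<and> (\<forall>is'. length is' = Suc m \<longrightarrow> mset (take m is') = mset (take m is) \<longrightarrow> is' ! m = is ! m
              \<longrightarrow> DeltaL y g is' ks = DeltaL y g is ks)"
  using part1[OF assms, of f] part2[OF assms, of g] part3[OF assms, of f] part4[OF assms, of g]
  by blast

thm_deps mainTheorem4

end
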